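(* Let $\mu>1$ be a real number and $\beta>1$ an integer such that $1-\mu^{-(1-1/\sqrt{\beta})}\ge \frac1e$ and $\mu>e$. Let $f_{\mu,\beta}(z)=\prod_{k=1}^\infty\left(1+\mu z^{\beta^k}\right)$, $z\in\mathbf D$. Then $D_+(f_{\mu,\beta})$ has full (Lebesgue) measure in $\mathbf T$.
   Context: $\mathbf D$ is the open unit disc, $\mathbf T$ the unit circle. The function $f_{\mu,\beta}$ belongs to the Korenblum space $A^{-\infty}$ (analytic $f$ on $\mathbf D$ with $|f(z)|\le C(1-|z|)^{-k}$ for some constants $C,k$). For such $f$, $D_+(f)=\{\theta\in[0,2\pi):\ \liminf_{r\to1}\frac{\log|f(re^{i\theta})|}{|\log(1-r)|}>0\}$, identified with a subset of $\mathbf T$ via $\theta\mapsto e^{i\theta}$. *)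

theory Defs
  imports "HOL-Analysis.Analysis"
begin

definition f_mu_beta :: "real \<Rightarrow> nat \<Rightarrow> complex \<Rightarrow> complex" where
  "f_mu_beta \<mu> \<beta> z = (\<Prod>k. 1 + complex_of_real \<mu> * z ^ (\<beta> ^ Suc k))"

definition log_abs :: "complex \<Rightarrow> ereal" where
  "log_abs w = (if w = 0 then -\<infinity> else ereal (ln (cmod w)))"

definition D_plus :: "(complex \<Rightarrow> complex) \<Rightarrow> real set" where
  "D_plus f = {\<theta> \<in> {0..<2*pi}.
     Liminf (at_left 1)
       (\<lambda>r::real. log_abs (f (complex_of_real r * cis \<theta>)) / ereal \<bar>ln (1 - r)\<bar>) > 0}"

end

theory Submission
  imports Defs "HOL-Real_Asymp.Real_Asymp"
begin


lemma sin_lower_aux: fixes y :: real assumes "0 \<le> y" "y \<le> 1" shows "5/6 * y \<le> sin y"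
proof -
  have "\<bar>sin y - (\<Sum>m<3. sin_coeff m * y ^ m)\<bar> \<le> inverse (fact 3) * \<bar>y\<bar> ^ 3"
    by (rule Maclaurin_sin_bound)
  moreover have "(\<Sum>m<3. sin_coeff m * y ^ m) = y"
    by (simp add: numeral_3_eq_3 sin_coeff_def)
  moreover have "y^3 \<le> y"
  proof -
    have "y*y \<le> 1" using assms by (simp add: mult_le_one)
    hence "y*(y*y) \<le> y*1" using assms by (intro mult_left_mono) auto
    thus ?thesis by (simp add: power3_eq_cube)
  qed
  ultimately have "\<bar>sin y - y\<bar> \<le> y / 6" using assms by (simp add: fact_numeral)
  moreover have "y - sin y \<le> \<bar>sin y - y\<bar>" by linarith
  ultimately show ?thesis by linarith
qed

lemma jordan3: assumes "\<bar>y\<bar> \<le> pi/2" shows "\<bar>y\<bar> \<le> 3 * \<bar>sin y\<bar>"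
proof -
  have main: "z \<le> 3 * sin z" if "0 \<le> z" "z \<le> pi/2" for z
  proof (cases "z \<le> 1")
    case True thus ?thesis using sin_lower_aux[of z] that by linarith
  next
    case False
    have "sin 1 \<le> sin z" using that False pi_ge_two by (subst sin_mono_le_eq) auto
    moreover have "5/6 \<le> sin (1::real)" using sin_lower_aux[of 1] by simp
    moreover have "z \<le> 2" using that pi_half_less_two by linarith
    ultimately show ?thesis by linarith
  qed
  show ?thesis
  proof (cases "0 \<le> y")
    case True thus ?thesis using main[of y] assms by auto
  next
    case False thus ?thesis using main[of "-y"] assms by auto
  qed
qed

lemma bad_cover:
  fixes m :: nat and \<delta> \<theta> :: real
  assumes m: "m \<ge> 1" and th: "0 \<le> \<theta>" "\<theta> \<le> 2*pi" and s: "\<bar>sin (real m * \<theta>)\<bar> < \<delta>"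
  shows "\<theta> \<in> (\<Union>j\<in>{0..2*m}. {real j * pi / m - 3*\<delta>/m .. real j * pi / m + 3*\<delta>/m})"
proof -
  define x where "x = real m * \<theta>"
  have x0: "0 \<le> x" and x1: "x \<le> 2 * pi * m" using th m by (auto simp: x_def)
  define j where "j = nat \<lfloor>x/pi + 1/2\<rfloor>"
  have fl0: "0 \<le> \<lfloor>x/pi + 1/2\<rfloor>" using x0 by simp
  hence jr: "real j = of_int \<lfloor>x/pi + 1/2\<rfloor>" by (simp add: j_def)
  have a1: "real j \<le> x/pi + 1/2" using jr by linarith
  have a2: "x/pi + 1/2 < real j + 1" using jr by linarith
  define y where "y = x - real j * pi"
  have "real j * pi \<le> x + pi/2" using a1 by (simp add: field_simps)
  moreover have "x + pi/2 < real j * pi + pi" using a2 by (simp add: field_simps)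
  ultimately have yb: "\<bar>y\<bar> \<le> pi/2" unfolding y_def abs_le_iff by linarith
  have "sin x = sin (y + real j * pi)" by (simp add: y_def)
  also have "\<dots> = sin y * (-1)^j" by (simp add: sin_add)
  finally have "\<bar>sin x\<bar> = \<bar>sin y\<bar>" by (simp add: abs_mult)
  hence "\<bar>y\<bar> \<le> 3 * \<delta>" using jordan3[OF yb] s by (simp add: x_def)
  hence "\<bar>\<theta> - real j * pi / m\<bar> \<le> 3 * \<delta> / m"
  proof -
    assume h: "\<bar>y\<bar> \<le> 3 * \<delta>"
    have "\<theta> - real j * pi / m = y / m" using m by (simp add: y_def x_def field_simps)
    thus ?thesis using h m by (simp add: abs_divide divide_right_mono)
  qed
  moreover have "j \<le> 2*m"
  proof -
    have "x/pi \<le> 2*m" using x1 by (simp add: pos_divide_le_eq mult_ac)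
    hence "x/pi + 1/2 < 2*m + 1" by linarith
    hence "real j < 2*m + 1" using a1 by linarith
    thus ?thesis by linarith
  qed
  ultimately show ?thesis unfolding abs_le_iff by (intro UN_I[of j]) auto
qed

definition badset :: "nat \<Rightarrow> real \<Rightarrow> real set" where
  "badset m \<delta> = {\<theta> \<in> {0..2*pi}. \<bar>sin (real m * \<theta>)\<bar> < \<delta>}"

lemma badset_sets: "badset m \<delta> \<in> sets lborel"
proof -
  have "open {\<theta>::real. \<bar>sin (real m * \<theta>)\<bar> < \<delta>}"
    by (intro open_Collect_less continuous_intros)
  hence "{\<theta>::real. \<bar>sin (real m * \<theta>)\<bar> < \<delta>} \<in> sets borel" by auto
  moreover have "{0..2*pi} \<in> sets (borel :: real measure)" by auto
  ultimately have "{0..2*pi} \<inter> {\<theta>::real. \<bar>sin (real m * \<theta>)\<bar> < \<delta>} \<in> sets borel" by auto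
  moreover have "badset m \<delta> = {0..2*pi} \<inter> {\<theta>::real. \<bar>sin (real m * \<theta>)\<bar> < \<delta>}"
    by (auto simp: badset_def)
  ultimately show ?thesis by simp
qed

lemma badset_emeasure:
  assumes m: "m \<ge> 1" and d: "\<delta> > 0"
  shows "emeasure lborel (badset m \<delta>) \<le> ennreal (18 * \<delta>)"
proof -
  define I where "I j = {real j * pi / m - 3*\<delta>/m .. real j * pi / m + 3*\<delta>/m}" for j
  have "badset m \<delta> \<subseteq> (\<Union>j\<in>{0..2*m}. I j)"
    using bad_cover[OF m] unfolding badset_def I_def by auto
  hence "emeasure lborel (badset m \<delta>) \<le> emeasure lborel (\<Union>j\<in>{0..2*m}. I j)"
    by (intro emeasure_mono) (auto simp: I_def)
  also have "\<dots> \<le> (\<Sum>j\<in>{0..2*m}. emeasure lborel (I j))"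
    by (intro emeasure_subadditive_finite) (auto simp: I_def)
  also have "\<dots> = (\<Sum>j\<in>{0..2*m}. ennreal (6*\<delta>/m))"
  proof (rule sum.cong)
    fix j assume "j \<in> {0..2*m}"
    have "real j * pi / m - 3*\<delta>/m \<le> real j * pi / m + 3*\<delta>/m" using d m by simp
    thus "emeasure lborel (I j) = ennreal (6*\<delta>/m)" unfolding I_def
      by (simp add: field_simps)
  qed simp
  also have "\<dots> = of_nat (2*m+1) * ennreal (6*\<delta>/m)" by simp
  also have "\<dots> = ennreal (real (2*m+1)) * ennreal (6*\<delta>/m)"
    by (simp only: ennreal_of_nat_eq_real_of_nat)
  also have "\<dots> = ennreal (real (2*m+1) * (6*\<delta>/m))"
    by (rule ennreal_mult[symmetric]) (use d in auto)
  also have "\<dots> \<le> ennreal (18 * \<delta>)"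
  proof (rule ennreal_leI)
    have "real (2*m+1) \<le> 3 * m" using m by simp
    hence "real (2*m+1) * (6*\<delta>) \<le> 3 * m * (6 * \<delta>)" using d by (intro mult_right_mono) auto
    thus "real (2*m+1) * (6*\<delta>/m) \<le> 18 * \<delta>" using m by (simp add: field_simps)
  qed
  finally show ?thesis .
qed

lemma ae_good:
  fixes \<beta> :: nat assumes "\<beta> > 1"
  shows "AE \<theta> in lborel. eventually (\<lambda>k. \<theta> \<notin> badset (\<beta> ^ Suc k) (1 / (real k + 2)^2)) sequentially"
proof -
  define A where "A k = badset (\<beta> ^ Suc k) (1 / (real k + 2)^2)" for k
  have m1: "\<beta> ^ Suc k \<ge> 1" for k using assms by simp
  have fin: "emeasure lborel (A k) < \<infinity>" for k
    using badset_emeasure[OF m1, of "1 / (real k + 2)^2" k] by (auto simp: A_def top_unique less_top[symmetric])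
  have ms: "measure lborel (A k) \<le> 18 * (1 / (real k + 2)^2)" for k
  proof -
    have "ennreal (measure lborel (A k)) \<le> ennreal (18 * (1 / (real k + 2)^2))"
      using badset_emeasure[OF m1, of "1 / (real k + 2)^2" k] fin[of k]
      by (simp add: A_def emeasure_eq_ennreal_measure[symmetric] less_top)
    thus ?thesis by (simp add: ennreal_le_iff2)
  qed
  have sq: "summable (\<lambda>k. inverse (real k ^ 2))" by (rule inverse_power_summable) simp
  hence sq1: "summable (\<lambda>k. inverse (real (Suc k) ^ 2))" by (subst summable_Suc_iff)
  have "summable (\<lambda>k. 18 * (1 / (real k + 2)^2))"
  proof (rule summable_mult, rule summable_comparison_test[OF _ sq1])
    show "\<exists>N. \<forall>n\<ge>N. norm (1 / (real n + 2)^2) \<le> inverse (real (Suc n) ^ 2)"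
      by (auto intro!: exI[of _ 0] simp: field_simps power_mono)
  qed
  hence summ: "summable (\<lambda>k. measure lborel (A k))"
  proof (rule summable_comparison_test[rotated])
    have "norm (measure lborel (A n)) \<le> 18 * (1 / (real n + 2)^2)" for n using ms[of n] by simp
    thus "\<exists>N. \<forall>n\<ge>N. norm (measure lborel (A n)) \<le> 18 * (1 / (real n + 2)^2)" by blast
  qed
  have As: "A k \<in> sets lborel" for k unfolding A_def by (rule badset_sets)
  from borel_cantelli_AE1[OF As fin summ]
  show ?thesis by (simp add: A_def)
qed

lemma pow_cis: "(complex_of_real r * cis t) ^ n = complex_of_real (r ^ n) * cis (real n * t)"
  apply (simp only: power_mult_distrib of_real_power)
  apply (rule arg_cong[where f="\<lambda>x. _ * x"])
  apply (rule Complex.DeMoivre)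
  done

lemma fac_sin: assumes "0 \<le> \<rho>" shows "\<bar>sin t\<bar> \<le> cmod (1 + complex_of_real \<rho> * cis t)"
proof -
  have e: "cmod (1 + complex_of_real \<rho> * cis t) = sqrt ((1 + \<rho> * cos t)^2 + (\<rho> * sin t)^2)"
    by (simp add: cmod_def cis.code)
  have "(1 + \<rho> * cos t)^2 + (\<rho> * sin t)^2 = (\<rho> + cos t)^2 + (sin t)^2"
  proof -
    have h: "sin t * sin t + cos t * cos t - 1 = 0" using sin_cos_squared_add[of t] by (simp add: power2_eq_square)
    have "(1 + \<rho> * cos t)^2 + (\<rho> * sin t)^2 - ((\<rho> + cos t)^2 + (sin t)^2) = (\<rho>*\<rho> - 1) * (sin t * sin t + cos t * cos t - 1)" by algebra
    also have "\<dots> = 0" by (simp only: h mult_zero_right)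
    finally show ?thesis by simp
  qed
  hence "(sin t)^2 \<le> (1 + \<rho> * cos t)^2 + (\<rho> * sin t)^2" by simp
  hence "sqrt ((sin t)^2) \<le> sqrt ((1 + \<rho> * cos t)^2 + (\<rho> * sin t)^2)" by (rule real_sqrt_le_mono)
  thus ?thesis using e by simp
qed

lemma fac_big: assumes "0 \<le> \<rho>" shows "\<rho> - 1 \<le> cmod (1 + complex_of_real \<rho> * cis t)"
  using norm_diff_ineq[of "complex_of_real \<rho> * cis t" 1] assms by (simp add: norm_mult add.commute)

lemma fac_small: assumes "0 \<le> \<rho>" shows "1 - \<rho> \<le> cmod (1 + complex_of_real \<rho> * cis t)"
  using norm_diff_ineq[of 1 "complex_of_real \<rho> * cis t"] assms by (simp add: norm_mult)

lemma geo_bound: fixes c :: real assumes "0 \<le> c" "c < 1" shows "(\<Sum>i<N. c^i) \<le> 1 / (1 - c)"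
proof -
  have "(\<Sum>i<N. c^i) = (1 - c^N) / (1 - c)" using assms by (simp add: sum_gp_strict)
  also have "\<dots> \<le> 1 / (1 - c)" using assms by (intro divide_right_mono) auto
  finally show ?thesis .
qed

lemma core:
  fixes \<mu> r \<theta> c0 :: real and \<beta> g C1 K0 :: nat
  assumes beta: "\<beta> > 1" and mu: "\<mu> > 0" and c0: "0 < c0" "c0 < 1" "1 < \<mu> * c0 - 1"
    and C1: "\<mu> * c0 ^ C1 \<le> 1/2"
    and r: "0 < r" "r < 1"
    and good: "\<forall>k<g. c0 \<le> r ^ (\<beta> ^ Suc k)" and gl: "r ^ (\<beta> ^ Suc g) < c0" and gK: "K0 \<le> g"
    and sinb: "\<forall>k\<ge>K0. 1 / (real k + 2)^2 \<le> \<bar>sin (real (\<beta> ^ Suc k) * \<theta>)\<bar>"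
  shows "f_mu_beta \<mu> \<beta> (complex_of_real r * cis \<theta>) \<noteq> 0 \<and>
    ln (\<mu> * c0 - 1) * g - 2 * C1 * ln (real g + C1 + 2) - 2 * \<mu> / (1 - c0)
      \<le> ln (cmod (f_mu_beta \<mu> \<beta> (complex_of_real r * cis \<theta>)))"
proof -
  define F where "F k = 1 + complex_of_real \<mu> * (complex_of_real r * cis \<theta>) ^ (\<beta> ^ Suc k)" for k
  define a where "a k = r ^ (\<beta> ^ Suc k)" for k
  have Feq: "F k = 1 + complex_of_real (\<mu> * a k) * cis (real (\<beta> ^ Suc k) * \<theta>)" for k
    unfolding F_def a_def pow_cis by simp
  have a0: "0 \<le> a k" for k using r by (simp add: a_def)
  have a1: "a k \<le> r ^ k" for k
  proof -
    have "k \<le> \<beta> ^ Suc k"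
    proof -
      have "k < 2 ^ k" by simp
      also have "(2::nat) ^ k \<le> \<beta> ^ k" using beta by (intro power_mono) auto
      also have "\<beta> ^ k \<le> \<beta> ^ Suc k" using beta by simp
      finally show ?thesis by simp
    qed
    thus ?thesis unfolding a_def using r by (intro power_decreasing) auto
  qed
  define \<gamma> where "\<gamma> = ln (\<mu> * c0 - 1)"
  define b where "b k = (if k < g then \<gamma> else if k < g + C1 then - 2 * ln (real g + C1 + 2)
      else - 2 * \<mu> * c0 ^ (k - g))" for k
  have bnd: "0 < cmod (F k) \<and> b k \<le> ln (cmod (F k))" for k
  proof -
    have rho0: "0 \<le> \<mu> * a k" using mu a0 by simp
    consider "k < g" | "g \<le> k" "k < g + C1" | "g + C1 \<le> k" by linarith
    thus ?thesis
    proof cases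
      case 1
      hence "c0 \<le> a k" using good by (simp add: a_def)
      hence "\<mu> * c0 \<le> \<mu> * a k" using mu by simp
      moreover have "\<mu> * a k - 1 \<le> cmod (F k)" by (subst Feq) (rule fac_big[OF rho0])
      ultimately have "\<mu> * c0 - 1 \<le> cmod (F k)" by linarith
      moreover have "0 < \<mu> * c0 - 1" using c0 by simp
      ultimately have "0 < cmod (F k)" "ln (\<mu> * c0 - 1) \<le> ln (cmod (F k))"
        by (auto intro: ln_mono)
      thus ?thesis using 1 by (simp add: b_def \<gamma>_def)
    next
      case 2
      have kK: "K0 \<le> k" using 2 gK by simp
      have p: "0 < 1 / (real k + 2)^2" by simp
      have "\<bar>sin (real (\<beta> ^ Suc k) * \<theta>)\<bar> \<le> cmod (F k)" by (subst Feq) (rule fac_sin[OF rho0])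
      hence "1 / (real k + 2)^2 \<le> cmod (F k)"
        using sinb kK by force
      hence pos: "0 < cmod (F k)" and "ln (1 / (real k + 2)^2) \<le> ln (cmod (F k))"
        using p by (auto intro: ln_mono)
      moreover have "ln (1 / (real k + 2)^2) = - 2 * ln (real k + 2)"
        by (simp add: ln_div ln_realpow)
      moreover have "ln (real k + 2) \<le> ln (real g + C1 + 2)" using 2 by simp
      ultimately have "-2 * ln (real g + C1 + 2) \<le> ln (cmod (F k))" by linarith
      thus ?thesis using 2 pos by (simp add: b_def)
    next
      case 3
      have ak: "a k = a g ^ (\<beta> ^ (k - g))"
      proof -
        have e: "\<beta> ^ Suc k = \<beta> ^ Suc g * \<beta> ^ (k - g)" using 3
          by (metis add_diff_inverse_nat not_add_less1 power_add plus_nat.simps(2) add.commute le_less_trans)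
        show ?thesis unfolding a_def by (simp only: e power_mult)
      qed
      have "k - g \<le> \<beta> ^ (k - g)"
      proof -
        have "k - g < 2 ^ (k - g)" by simp
        also have "(2::nat) ^ (k - g) \<le> \<beta> ^ (k - g)" using beta by (intro power_mono) auto
        finally show ?thesis by simp
      qed
      hence "a g ^ (\<beta> ^ (k - g)) \<le> a g ^ (k - g)"
        using a0[of g] gl r c0 by (intro power_decreasing) (auto simp: a_def)
      also have "\<dots> \<le> c0 ^ (k - g)" using a0[of g] gl by (intro power_mono) (auto simp: a_def)
      finally have akc: "a k \<le> c0 ^ (k - g)" using ak by simp
      have "c0 ^ (k - g) \<le> c0 ^ C1" using 3 c0 by (intro power_decreasing) auto
      hence x2: "\<mu> * a k \<le> 1/2" using akc C1 mu by (smt (verit) mult_left_mono)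
      have "1 - \<mu> * a k \<le> cmod (F k)" by (subst Feq) (rule fac_small[OF rho0])
      moreover have "0 < 1 - \<mu> * a k" using x2 by simp
      moreover have "- (\<mu> * a k) - 2 * (\<mu> * a k)^2 \<le> ln (1 - \<mu> * a k)"
        using ln_one_minus_pos_lower_bound[OF rho0 x2] .
      moreover have "(\<mu> * a k)^2 \<le> (\<mu> * a k) / 2" using mult_left_mono[OF x2 rho0] by (simp add: power2_eq_square)
      moreover have "\<mu> * a k \<le> \<mu> * c0 ^ (k - g)" using akc mu by simp
      ultimately have "- 2 * \<mu> * c0 ^ (k - g) \<le> ln (cmod (F k))"
        using ln_mono[of "1 - \<mu> * a k" "cmod (F k)"] by linarith
      moreover have "0 < cmod (F k)" using \<open>0 < 1 - \<mu> * a k\<close> \<open>1 - \<mu> * a k \<le> cmod (F k)\<close> by linarith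
      ultimately show ?thesis using 3 by (simp add: b_def)
    qed
  qed
  define B where "B = ln (\<mu> * c0 - 1) * g - 2 * C1 * ln (real g + C1 + 2) - 2 * \<mu> / (1 - c0)"
  have sumb: "B \<le> (\<Sum>k<n. b k)" if n: "g + C1 \<le> n" for n
  proof -
    have split: "(\<Sum>k<n. b k) = (\<Sum>k\<in>{0..<g}. b k) + (\<Sum>k\<in>{g..<g+C1}. b k) + (\<Sum>k\<in>{g+C1..<n}. b k)"
      using n by (simp add: lessThan_atLeast0 sum.atLeastLessThan_concat)
    have s1: "(\<Sum>k\<in>{0..<g}. b k) = \<gamma> * g" by (simp add: b_def)
    have s2: "(\<Sum>k\<in>{g..<g+C1}. b k) = - 2 * ln (real g + C1 + 2) * C1" by (simp add: b_def)
    have s3a: "(\<Sum>k\<in>{g+C1..<n}. b k) = - 2 * \<mu> * (\<Sum>k\<in>{g+C1..<n}. c0 ^ (k - g))"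
      by (simp add: b_def sum_distrib_left)
    have "(\<Sum>k\<in>{g+C1..<n}. c0 ^ (k - g)) \<le> (\<Sum>k\<in>{g..<n}. c0 ^ (k - g))"
      using c0 by (intro sum_mono2) auto
    also have "(\<Sum>k\<in>{g..<n}. c0 ^ (k - g)) = (\<Sum>i\<in>{0..<n-g}. c0 ^ i)"
      using sum.shift_bounds_nat_ivl[of "\<lambda>k. c0^(k-g)" 0 g "n-g"] n by simp
    also have "\<dots> \<le> 1 / (1 - c0)" using geo_bound[of c0 "n-g"] c0 by (simp add: lessThan_atLeast0)
    finally have "(\<Sum>k\<in>{g+C1..<n}. c0 ^ (k - g)) \<le> 1 / (1 - c0)" .
    hence "2 * \<mu> * (\<Sum>k\<in>{g+C1..<n}. c0 ^ (k - g)) \<le> 2 * \<mu> * (1 / (1 - c0))"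
      using mu by (intro mult_left_mono) auto
    hence "- 2 * \<mu> * (1 / (1 - c0)) \<le> (\<Sum>k\<in>{g+C1..<n}. b k)"
      unfolding s3a by simp
    thus ?thesis unfolding split s1 s2 B_def \<gamma>_def by (simp add: algebra_simps)
  qed
  have pexp: "exp B \<le> cmod (\<Prod>i\<le>n. F i)" if n: "g + C1 \<le> n" for n
  proof -
    have "cmod (\<Prod>i\<le>n. F i) = (\<Prod>i\<le>n. cmod (F i))" by (simp add: prod_norm)
    also have "\<dots> = (\<Prod>i\<le>n. exp (ln (cmod (F i))))" using bnd by (intro prod.cong) auto
    also have "\<dots> = exp (\<Sum>i\<le>n. ln (cmod (F i)))" by (simp add: exp_sum)
    finally have e: "cmod (\<Prod>i\<le>n. F i) = exp (\<Sum>i\<le>n. ln (cmod (F i)))" .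
    have "B \<le> (\<Sum>k<Suc n. b k)" using sumb[of "Suc n"] n by simp
    also have "\<dots> = (\<Sum>k\<le>n. b k)" by (simp add: lessThan_Suc_atMost)
    also have "\<dots> \<le> (\<Sum>i\<le>n. ln (cmod (F i)))" using bnd by (intro sum_mono) auto
    finally show ?thesis unfolding e by simp
  qed
  have sn: "summable (\<lambda>i. norm (F i - 1))"
  proof (rule summable_comparison_test[OF _ summable_mult[OF summable_geometric[of r]]])
    show "norm r < 1" using r by simp
    have "norm (norm (F i - 1)) \<le> \<mu> * r ^ i" for i
    proof -
      have "norm (F i - 1) = \<mu> * a i" using Feq[of i] mu a0[of i] by (simp add: norm_mult)
      thus ?thesis using a1[of i] mu a0[of i] by simp
    qed
    thus "\<exists>N. \<forall>n\<ge>N. norm (norm (F n - 1)) \<le> \<mu> * r ^ n" by blast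
  qed
  have conv: "convergent_prod F"
    by (rule abs_convergent_prod_imp_convergent_prod[OF summable_imp_abs_convergent_prod[OF sn]])
  have lim: "(\<lambda>n. cmod (\<Prod>i\<le>n. F i)) \<longlonglongrightarrow> cmod (prodinf F)"
    by (intro tendsto_norm convergent_prod_LIMSEQ[OF conv])
  have "exp B \<le> cmod (prodinf F)"
    by (rule LIMSEQ_le_const[OF lim]) (use pexp in blast)
  moreover have "prodinf F = f_mu_beta \<mu> \<beta> (complex_of_real r * cis \<theta>)"
    unfolding f_mu_beta_def F_def[abs_def] ..
  ultimately have eB: "exp B \<le> cmod (f_mu_beta \<mu> \<beta> (complex_of_real r * cis \<theta>))" by simp
  moreover have "0 < exp B" by simp
  ultimately have pos: "0 < cmod (f_mu_beta \<mu> \<beta> (complex_of_real r * cis \<theta>))" by linarith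
  with eB have "B \<le> ln (cmod (f_mu_beta \<mu> \<beta> (complex_of_real r * cis \<theta>)))"
    by (subst ln_ge_iff) auto
  with pos show ?thesis unfolding B_def[symmetric] by auto
qed


lemma Lfilter: "filterlim (\<lambda>r::real. - ln (1 - r)) at_top (at_left 1)"
  by real_asymp

lemma ln_lin: fixes y M :: real assumes "0 < y" "0 < M" shows "ln y \<le> ln M + y / M"
proof -
  have "ln (y / M) \<le> y / M - 1" using assms by (intro ln_le_minus_one) auto
  thus ?thesis using assms by (simp add: ln_divide_pos)
qed

lemma g_bound:
  fixes r c0 :: real and \<beta> g :: nat
  assumes beta: "\<beta> > 1" and c0: "0 < c0" "c0 < 1" and r: "1/2 < r" "r < 1"
    and gl: "r ^ (\<beta> ^ Suc g) < c0"
  shows "ln (- ln c0 / 2) - ln (1 - r) < (real g + 1) * ln (real \<beta>)"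
proof -
  define m where "m = real (\<beta> ^ Suc g)"
  have m0: "0 < m" using beta by (simp add: m_def)
  have "ln (r ^ (\<beta> ^ Suc g)) < ln c0" using gl r c0 by simp
  hence "m * ln r < ln c0" by (simp add: ln_realpow m_def)
  hence A: "- ln c0 < m * (- ln r)" by simp
  have "ln (1 / r) \<le> 1 / r - 1" using r by (intro ln_le_minus_one) auto
  hence "- ln r \<le> (1 - r) / r" using r by (simp add: ln_div field_simps)
  also have "\<dots> \<le> 2 * (1 - r)"
  proof -
    have "0 \<le> (1 - r) * (2 * r - 1)" using r by (intro mult_nonneg_nonneg) auto
    hence "1 - r \<le> 2 * (1 - r) * r" by (simp add: algebra_simps)
    thus ?thesis using r by (simp add: pos_divide_le_eq)
  qed
  finally have "m * (- ln r) \<le> m * (2 * (1 - r))" using m0 by (intro mult_left_mono) auto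
  with A have B: "- ln c0 / 2 / (1 - r) < m" using r by (simp add: field_simps)
  have pos: "0 < - ln c0 / 2 / (1 - r)" using c0 r by (intro divide_pos_pos) auto
  hence "ln (- ln c0 / 2 / (1 - r)) < ln m" using B by simp
  moreover have "ln (- ln c0 / 2 / (1 - r)) = ln (- ln c0 / 2) - ln (1 - r)"
    using c0 r by (subst ln_divide_pos) auto
  moreover have "ln m = (real g + 1) * ln (real \<beta>)" unfolding m_def of_nat_power ln_realpow by simp
  ultimately show ?thesis by simp
qed

lemma lin_final:
  fixes \<gamma> CC lnM CT c EE g lf lg L :: real
  assumes "\<gamma> / 4 * (CC + 2) + 2 * CC * lnM + CT + \<gamma> / 2 - c * EE < \<gamma> / 4 * g"
    "\<gamma> * g - 2 * CC * lg - CT \<le> lf"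
    "2 * CC * lg \<le> 2 * CC * lnM + \<gamma> / 4 * (g + CC + 2)"
    "c * L \<le> \<gamma> / 2 * (g + 1) - c * EE"
  shows "c * L \<le> lf"
proof -
  have h1: "\<gamma> / 4 * (CC + 2) = (\<gamma> * CC) / 4 + \<gamma> / 2" by (simp add: field_simps)
  have e2: "\<gamma> / 4 * (g + CC + 2) = (\<gamma> * g) / 4 + (\<gamma> * CC) / 4 + \<gamma> / 2" by (simp add: field_simps)
  have e3: "\<gamma> / 2 * (g + 1) = (\<gamma> * g) / 2 + \<gamma> / 2" by (simp add: field_simps)
  have e4: "\<gamma> / 4 * g = (\<gamma> * g) / 4" by simp
  have e5: "2 * CC * lnM = 2 * (CC * lnM)" "2 * CC * lg = 2 * (CC * lg)" by simp_all
  show ?thesis using assms unfolding h1 e2 e3 e4 e5 by linarith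
qed

lemma main_lim:
  fixes \<mu> \<theta> :: real and \<beta> K0 :: nat
  assumes beta: "\<beta> > 1" and mu: "\<mu> > 2"
    and sinb: "\<forall>k\<ge>K0. 1 / (real k + 2)^2 \<le> \<bar>sin (real (\<beta> ^ Suc k) * \<theta>)\<bar>"
  shows "0 < Liminf (at_left 1) (\<lambda>r::real. log_abs (f_mu_beta \<mu> \<beta> (complex_of_real r * cis \<theta>)) / ereal \<bar>ln (1 - r)\<bar>)"
proof -
  define c0 where "c0 = (1 + 2 / \<mu>) / 2"
  have c0p: "0 < c0" "c0 < 1" using mu by (auto simp: c0_def field_simps)
  have c0m: "\<mu> * c0 - 1 = \<mu> / 2" using mu by (simp add: c0_def field_simps)
  have c0g: "1 < \<mu> * c0 - 1" using c0m mu by simp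
  obtain C1 where C1': "c0 ^ C1 < 1 / (2 * \<mu>)" using real_arch_pow_inv[of "1 / (2 * \<mu>)" c0] mu c0p by auto
  have C1: "\<mu> * c0 ^ C1 \<le> 1/2" using C1' mu by (simp add: field_simps)
  define \<gamma> where "\<gamma> = ln (\<mu> * c0 - 1)"
  have \<gamma>p: "0 < \<gamma>" using c0g by (simp add: \<gamma>_def)
  define l\<beta> where "l\<beta> = ln (real \<beta>)"
  have l\<beta>p: "0 < l\<beta>" using beta by (simp add: l\<beta>_def)
  define e1 where "e1 = ln (- ln c0 / 2)"
  define M where "M = 8 * C1 / \<gamma> + 1"
  have Mp: "0 < M"
  proof -
    have "0 \<le> 8 * C1 / \<gamma>" using \<gamma>p by simp
    thus ?thesis by (simp add: M_def)
  qed
  define C3 where "C3 = 2 * \<mu> / (1 - c0)"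
  define c where "c = \<gamma> / (2 * l\<beta>)"
  have cp: "0 < c" using \<gamma>p l\<beta>p by (simp add: c_def)
  define D where "D = \<gamma> / 4 * (C1 + 2) + 2 * C1 * ln M + C3 + \<gamma> / 2 - c * e1"
  define X where "X = max (4 * D / \<gamma>) (real K0)"
  define T where "T = (X + 1) * l\<beta> - e1"
  have ev: "eventually (\<lambda>r. r \<in> {1/2<..<1} \<and> T \<le> - ln (1 - r)) (at_left (1::real))"
    using eventually_at_left_real[of "1/2" 1] filterlim_at_top[THEN iffD1, OF Lfilter, rule_format, of T]
    by (auto elim: eventually_elim2)
  have "eventually (\<lambda>r. ereal c \<le> log_abs (f_mu_beta \<mu> \<beta> (complex_of_real r * cis \<theta>)) / ereal \<bar>ln (1 - r)\<bar>) (at_left (1::real))"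
    using ev
  proof (rule eventually_mono)
    fix r :: real assume "r \<in> {1/2<..<1} \<and> T \<le> - ln (1 - r)"
    hence r: "1/2 < r" "r < 1" and LT: "T \<le> - ln (1 - r)" by auto
    define L where "L = - ln (1 - r)"
    have Lp: "0 < L" using r by (simp add: L_def)
    have absL: "\<bar>ln (1 - r)\<bar> = L" using r by (simp add: L_def)
    have ex: "\<exists>k. r ^ (\<beta> ^ Suc k) < c0"
    proof -
      obtain n where n: "r ^ n < c0" using real_arch_pow_inv[of c0 r] c0p r by auto
      have "n \<le> \<beta> ^ Suc n"
      proof -
        have "n < 2 ^ n" by simp
        also have "(2::nat) ^ n \<le> \<beta> ^ n" using beta by (intro power_mono) auto
        also have "\<beta> ^ n \<le> \<beta> ^ Suc n" using beta by simp
        finally show ?thesis by simp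
      qed
      hence "r ^ (\<beta> ^ Suc n) \<le> r ^ n" using r by (intro power_decreasing) auto
      thus ?thesis using n by (intro exI[of _ n]) simp
    qed
    define g where "g = (LEAST k. r ^ (\<beta> ^ Suc k) < c0)"
    have gl: "r ^ (\<beta> ^ Suc g) < c0" unfolding g_def by (rule LeastI_ex[OF ex])
    have good: "\<forall>k<g. c0 \<le> r ^ (\<beta> ^ Suc k)" unfolding g_def using not_less_Least by force
    have gb: "e1 + L < (real g + 1) * l\<beta>"
      using g_bound[OF beta c0p r gl] by (simp add: e1_def L_def l\<beta>_def)
    have "(X + 1) * l\<beta> < (real g + 1) * l\<beta>" using gb LT by (simp add: T_def L_def)
    hence gX: "X < real g" using l\<beta>p by simp
    hence gK: "K0 \<le> g" and gD: "4 * D / \<gamma> < real g" by (auto simp: X_def)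
    from core[OF beta _ c0p c0g C1 _ r(2) good gl gK sinb] mu r
    have nz: "f_mu_beta \<mu> \<beta> (complex_of_real r * cis \<theta>) \<noteq> 0"
      and co: "\<gamma> * g - 2 * C1 * ln (real g + C1 + 2) - C3
        \<le> ln (cmod (f_mu_beta \<mu> \<beta> (complex_of_real r * cis \<theta>)))"
      by (auto simp: \<gamma>_def C3_def)
    have y0: "0 < real g + C1 + 2" by simp
    have "2 * C1 * ln (real g + C1 + 2) \<le> 2 * C1 * (ln M + (real g + C1 + 2) / M)"
      using ln_lin[OF y0 Mp] by (intro mult_left_mono) auto
    also have "\<dots> = 2 * C1 * ln M + (2 * C1 / M) * (real g + C1 + 2)" using Mp by (simp add: field_simps)
    also have "\<dots> \<le> 2 * C1 * ln M + (\<gamma> / 4) * (real g + C1 + 2)"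
    proof -
      have "\<gamma> * M = 8 * C1 + \<gamma>" using \<gamma>p by (simp add: M_def field_simps)
      hence "2 * C1 / M \<le> \<gamma> / 4" using Mp \<gamma>p by (simp add: field_simps)
      thus ?thesis using y0 by (intro add_left_mono mult_right_mono) auto
    qed
    finally have lnb: "2 * C1 * ln (real g + C1 + 2) \<le> 2 * C1 * ln M + (\<gamma> / 4) * (real g + C1 + 2)" .
    have "c * L \<le> c * ((real g + 1) * l\<beta> - e1)" using gb cp by (intro mult_left_mono) auto
    also have "\<dots> = \<gamma> / 2 * (real g + 1) - c * e1" using l\<beta>p by (simp add: c_def field_simps)
    finally have cL: "c * L \<le> \<gamma> / 2 * (real g + 1) - c * e1" .
    have "D < \<gamma> / 4 * real g" using gD \<gamma>p by (simp add: field_simps)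
    have "c * L \<le> ln (cmod (f_mu_beta \<mu> \<beta> (complex_of_real r * cis \<theta>)))"
    proof (rule lin_final[where \<gamma>=\<gamma> and CC="real C1" and lnM="ln M" and CT=C3 and c=c and EE=e1 and g="real g" and lg="ln (real g + C1 + 2)"])
      show "\<gamma> / 4 * (real C1 + 2) + 2 * real C1 * ln M + C3 + \<gamma> / 2 - c * e1 < \<gamma> / 4 * real g"
        using \<open>D < \<gamma> / 4 * real g\<close> unfolding D_def by (simp add: ac_simps)
      show "\<gamma> * real g - 2 * real C1 * ln (real g + C1 + 2) - C3 \<le> ln (cmod (f_mu_beta \<mu> \<beta> (complex_of_real r * cis \<theta>)))"
        using co by simp
      show "2 * real C1 * ln (real g + C1 + 2) \<le> 2 * real C1 * ln M + \<gamma> / 4 * (real g + real C1 + 2)"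
        using lnb by simp
      show "c * L \<le> \<gamma> / 2 * (real g + 1) - c * e1" by (rule cL)
    qed
    hence "c \<le> ln (cmod (f_mu_beta \<mu> \<beta> (complex_of_real r * cis \<theta>))) / L"
      using Lp by (simp add: field_simps)
    thus "ereal c \<le> log_abs (f_mu_beta \<mu> \<beta> (complex_of_real r * cis \<theta>)) / ereal \<bar>ln (1 - r)\<bar>"
      using nz Lp by (simp add: log_abs_def absL)
  qed
  hence "ereal c \<le> Liminf (at_left 1) (\<lambda>r::real. log_abs (f_mu_beta \<mu> \<beta> (complex_of_real r * cis \<theta>)) / ereal \<bar>ln (1 - r)\<bar>)"
    by (rule Liminf_bounded)
  moreover have "0 < ereal c" using cp by simp
  ultimately show ?thesis by (rule less_le_trans[rotated])
qed


theorem proposition3: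
  fixes \<mu> :: real and \<beta> :: nat
  assumes "\<mu> > 1" and "\<beta> > 1"
    and "1 - \<mu> powr (-(1 - 1 / sqrt (real \<beta>))) \<ge> 1 / exp 1"
    and "\<mu> > exp 1"
  shows "{0..<2*pi} - D_plus (f_mu_beta \<mu> \<beta>) \<in> null_sets lebesgue"
proof -
  have mu2: "\<mu> > 2" using assms(4) exp_ge_add_one_self[of 1] by linarith
  have "AE \<theta> in lborel. eventually (\<lambda>k. \<theta> \<notin> badset (\<beta> ^ Suc k) (1 / (real k + 2)^2)) sequentially"
    by (rule ae_good[OF assms(2)])
  then obtain N where N: "N \<in> null_sets lborel"
    and sub: "{\<theta> \<in> space lborel. \<not> eventually (\<lambda>k. \<theta> \<notin> badset (\<beta> ^ Suc k) (1 / (real k + 2)^2)) sequentially} \<subseteq> N"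
    unfolding eventually_ae_filter by blast
  have "{0..<2*pi} - D_plus (f_mu_beta \<mu> \<beta>) \<subseteq> N"
  proof
    fix \<theta> assume th: "\<theta> \<in> {0..<2*pi} - D_plus (f_mu_beta \<mu> \<beta>)"
    have "\<not> eventually (\<lambda>k. \<theta> \<notin> badset (\<beta> ^ Suc k) (1 / (real k + 2)^2)) sequentially"
    proof
      assume "eventually (\<lambda>k. \<theta> \<notin> badset (\<beta> ^ Suc k) (1 / (real k + 2)^2)) sequentially"
      then obtain K0 where K0: "\<forall>k\<ge>K0. \<theta> \<notin> badset (\<beta> ^ Suc k) (1 / (real k + 2)^2)"
        unfolding eventually_sequentially by blast
      have "\<forall>k\<ge>K0. 1 / (real k + 2)^2 \<le> \<bar>sin (real (\<beta> ^ Suc k) * \<theta>)\<bar>"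
        using K0 th by (auto simp: badset_def not_less)
      from main_lim[OF assms(2) mu2 this]
      have "\<theta> \<in> D_plus (f_mu_beta \<mu> \<beta>)" using th by (simp add: D_plus_def)
      thus False using th by simp
    qed
    thus "\<theta> \<in> N" using sub by auto
  qed
  moreover have "N \<in> null_sets lebesgue" using N by (rule null_sets_completionI)
  ultimately show ?thesis by (rule completion.complete2)
qed

end
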